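(* Assume $\sigma_1(x)=\sigma_1'(0)x$ with $\sigma_1'(0)\ne0$ and $(1-q^{-1})\tau(0)=-\sigma_1'(0)$, so that $\sigma_2(x)=\tfrac12\sigma_2''(0)x^2$ with $\tfrac12\sigma_2''(0)=q(1-q^{-1})\tau'(0)$ (thus the zero $a_2$ of $\sigma_2$ is $a_2=0$, and $y_0:=q^{-1}\Big[1+\frac{(1-q^{-1})\tau(0)}{\sigma_1'(0)}\Big]$ satisfies $qy_0=0$). Assume $\Lambda_q:=\tau'(0)/\sigma_1'(0)<0$. Let $$\rho(x)=|x|^{\alpha}\sqrt{x^{\log_qx-1}},\qquad q^{\alpha}=\frac{q^{-2}\tfrac12\sigma_2''(0)}{\sigma_1'(0)}.$$ Then there exist polynomials $P_n$, $n\in\mathbb{N}_0$, with $P_n$ of degree $n$ a solution of the q-EHT with $\lambda=\lambda_n$, and nonzero constants $d_n^2$, such that for all $m,n\in\mathbb{N}_0$ $$\int_0^{\infty}P_n(x)P_m(x)\rho(x)\,d_qx=d_n^2\delta_{mn},$$ i.e. orthogonality with respect to $\rho$ supported on $\{q^{\mp k}\}_{k\in\mathbb{N}_0}$.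
   Context: Throughout $0<q<1$. For a function $y$ and $\zeta\in\{q,q^{-1}\}$, $D_\zeta y(x)=\frac{y(x)-y(\zeta x)}{(1-\zeta)x}$ for $x\ne0$ and $D_\zeta y(0)=y'(0)$; $[n]_q=\frac{1-q^n}{1-q}$. Let $\sigma_1$ be a real polynomial of degree at most two, $\tau(x)=\tau'(0)x+\tau(0)$ a real polynomial with $\tau'(0)\ne0$, and $\sigma_2(x):=q[\sigma_1(x)+(1-q^{-1})x\tau(x)]$. The q-EHT with parameter $n$ is $\sigma_1(x)D_{q^{-1}}D_qy(x)+\tau(x)D_qy(x)+\lambda_ny(x)=0$, $\lambda_n=-[n]_q\big(\tau'(0)+\tfrac12[n-1]_{q^{-1}}\sigma_1''(0)\big)$. For $q^\alpha=c$ ($c\ne0$), $\alpha$ is any complex number with $e^{\alpha\ln q}=c$ and $|x|^\alpha:=e^{\alpha\ln|x|}$; for $x>0$, $\sqrt{x^{\log_qx-1}}:=\exp\big(\tfrac12(\log_qx-1)\ln x\big)$. The improper $q$-Jackson integral is $\int_0^\infty f(x)\,d_qx=(1-q)\sum_{j=-\infty}^{\infty}q^jf(q^j)$. *)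

theory Defs
  imports "HOL-Analysis.Analysis" "HOL-Computational_Algebra.Polynomial"
begin

definition qD :: "real \<Rightarrow> (real \<Rightarrow> real) \<Rightarrow> real \<Rightarrow> real" where
  "qD \<zeta> y x = (if x = 0 then deriv y 0 else (y x - y (\<zeta> * x)) / ((1 - \<zeta>) * x))"

definition qnum :: "real \<Rightarrow> int \<Rightarrow> real" where
  "qnum q n = (1 - q powi n) / (1 - q)"

definition sigma2 :: "real \<Rightarrow> real poly \<Rightarrow> real poly \<Rightarrow> real poly" where
  "sigma2 q \<sigma>1 \<tau> = smult q (\<sigma>1 + smult (1 - 1/q) ([:0, 1:] * \<tau>))"

text \<open>lambda_n = -[n]_q (tau'(0) + (1/2)[n-1]_{q^{-1}} sigma_1''(0)); note (1/2)sigma_1''(0) = coeff sigma_1 2.\<close>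
definition qlambda :: "real \<Rightarrow> real poly \<Rightarrow> real poly \<Rightarrow> nat \<Rightarrow> real" where
  "qlambda q \<sigma>1 \<tau> n =
     - qnum q (int n) * (coeff \<tau> 1 + qnum (1/q) (int n - 1) * coeff \<sigma>1 2)"

definition qEHT_solution :: "real \<Rightarrow> real poly \<Rightarrow> real poly \<Rightarrow> real \<Rightarrow> (real \<Rightarrow> real) \<Rightarrow> bool" where
  "qEHT_solution q \<sigma>1 \<tau> lam y \<longleftrightarrow>
     (\<forall>x. poly \<sigma>1 x * qD (1/q) (qD q y) x + poly \<tau> x * qD q y x + lam * y x = 0)"

text \<open>Improper q-Jackson integral: (1-q) sum_{j in Z} q^j f(q^j) = I, the bilateral
  series converging (unconditionally) to I.\<close>
definition jackson_has_integral :: "real \<Rightarrow> (real \<Rightarrow> complex) \<Rightarrow> complex \<Rightarrow> bool" where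
  "jackson_has_integral q f I \<longleftrightarrow>
     ((\<lambda>j::int. complex_of_real ((1 - q) * q powi j) * f (q powi j)) has_sum I) UNIV"

end

theory Submission
  imports Defs
begin



definition qs :: "real \<Rightarrow> nat \<Rightarrow> real" where "qs z n = (\<Sum>i<n. z^i)"
definition qdp :: "real \<Rightarrow> real poly \<Rightarrow> real poly" where
  "qdp z p = (\<Sum>k<degree p. monom (coeff p (Suc k) * qs z (Suc k)) k)"

lemma coeff_qdp: "coeff (qdp z p) k = coeff p (Suc k) * qs z (Suc k)"
  unfolding qdp_def coeff_sum coeff_monom
  by (cases "k < degree p") (auto simp: coeff_eq_0)

lemma qs_eq: "z \<noteq> 1 \<Longrightarrow> (1 - z) * qs z n = 1 - z^n"
  by (simp add: qs_def sum_gp_strict)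

lemma poly_qdp:
  assumes "x \<noteq> 0" "z \<noteq> 1"
  shows "poly (qdp z p) x = (poly p x - poly p (z*x)) / ((1-z)*x)"
proof -
  have "(1-z)*x*poly (qdp z p) x = (\<Sum>k<degree p. coeff p (Suc k) * (1 - z^Suc k) * x^Suc k)"
    unfolding qdp_def poly_sum poly_monom sum_distrib_left
  proof (rule sum.cong)
    fix k assume "k \<in> {..<degree p}"
    have "(1 - z) * x * (coeff p (Suc k) * qs z (Suc k) * x ^ k)
       = coeff p (Suc k) * ((1 - z) * qs z (Suc k)) * x ^ Suc k" by (simp add: algebra_simps)
    then show "(1 - z) * x * (coeff p (Suc k) * qs z (Suc k) * x ^ k)
       = coeff p (Suc k) * (1 - z ^ Suc k) * x ^ Suc k" using qs_eq[OF assms(2)] by simp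
  qed simp
  also have "\<dots> = (\<Sum>i<Suc (degree p). coeff p i * (1 - z^i) * x^i)"
    by (subst sum.lessThan_Suc_shift) simp
  also have "\<dots> = poly p x - poly p (z*x)"
    by (simp add: poly_altdef lessThan_Suc_atMost sum_subtractf[symmetric] power_mult_distrib algebra_simps)
  finally show ?thesis using assms by (simp add: field_simps)
qed

lemma qD_poly: "z \<noteq> 1 \<Longrightarrow> qD z (poly p) = poly (qdp z p)"
proof
  fix x assume z: "z \<noteq> 1"
  show "qD z (poly p) x = poly (qdp z p) x"
  proof (cases "x = 0")
    case True
    have "deriv (poly p) 0 = poly (pderiv p) 0"
      by (rule DERIV_imp_deriv[OF poly_DERIV])
    then show ?thesis using True
      by (simp add: qD_def poly_0_coeff_0 coeff_pderiv coeff_qdp qs_def)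
  next
    case False
    then show ?thesis using z by (simp add: qD_def poly_qdp)
  qed
qed

definition Lop :: "real \<Rightarrow> real poly \<Rightarrow> real poly \<Rightarrow> real poly \<Rightarrow> real poly" where
  "Lop q \<sigma>1 \<tau> p = \<sigma>1 * qdp (1/q) (qdp q p) + \<tau> * qdp q p"

lemma qEHT_iff:
  assumes "0 < q" "q \<noteq> 1"
  shows "qEHT_solution q \<sigma>1 \<tau> lam (poly p) \<longleftrightarrow> (\<forall>x. poly (Lop q \<sigma>1 \<tau> p) x + lam * poly p x = 0)"
proof -
  have "1/q \<noteq> 1" using assms by (simp add: field_simps)
  then show ?thesis using assms unfolding qEHT_solution_def
    by (simp add: qD_poly Lop_def)
qed

lemma coeff_Lop:
  "coeff (Lop q [:0,s1:] [:t0,t1:] p) k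
     = (s1 * qs (1/q) k + t0) * qs q (Suc k) * coeff p (Suc k) + t1 * qs q k * coeff p k"
  by (cases k) (simp_all add: Lop_def coeff_qdp qs_def algebra_simps)

lemma qs_mono: "0 < z \<Longrightarrow> k < n \<Longrightarrow> qs z k < qs z n"
proof (induction n)
  case 0 then show ?case by simp
next
  case (Suc n)
  have "qs z (Suc n) = qs z n + z^n" by (simp add: qs_def)
  moreover have "z^n > 0" using Suc by simp
  ultimately show ?case
  proof (cases "k < n")
    case True
    then have "qs z k < qs z n" using Suc by simp
    then show ?thesis using \<open>qs z (Suc n) = qs z n + z^n\<close> \<open>z^n > 0\<close> by linarith
  next
    case False
    then have "k = n" using Suc by simp
    then show ?thesis using \<open>qs z (Suc n) = qs z n + z^n\<close> \<open>z^n > 0\<close> by simp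
  qed
qed




definition cf :: "real \<Rightarrow> real \<Rightarrow> real \<Rightarrow> real \<Rightarrow> nat \<Rightarrow> nat \<Rightarrow> real" where
  "cf q s1 t0 t1 n k = (if k \<le> n then
     (\<Prod>i\<in>{k..<n}. ((s1 * qs (1/q) i + t0) * qs q (Suc i)) / (t1 * qs q n - t1 * qs q i)) else 0)"

definition Pp :: "real \<Rightarrow> real \<Rightarrow> real \<Rightarrow> real \<Rightarrow> nat \<Rightarrow> real poly" where
  "Pp q s1 t0 t1 n = (\<Sum>k\<le>n. monom (cf q s1 t0 t1 n k) k)"

lemma coeff_Pp: "coeff (Pp q s1 t0 t1 n) k = cf q s1 t0 t1 n k"
  unfolding Pp_def coeff_sum coeff_monom by (auto simp: cf_def)

lemma degree_Pp: "degree (Pp q s1 t0 t1 n) = n"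
proof (rule antisym)
  show "degree (Pp q s1 t0 t1 n) \<le> n"
    by (rule degree_le) (auto simp: coeff_Pp cf_def)
  show "n \<le> degree (Pp q s1 t0 t1 n)"
    by (rule le_degree) (simp add: coeff_Pp cf_def)
qed

lemma Pp_eigen:
  assumes q: "0 < q" and t1: "t1 \<noteq> 0"
  shows "Lop q [:0,s1:] [:t0,t1:] (Pp q s1 t0 t1 n) = smult (t1 * qs q n) (Pp q s1 t0 t1 n)"
proof (rule poly_eqI)
  fix k
  show "coeff (Lop q [:0,s1:] [:t0,t1:] (Pp q s1 t0 t1 n)) k = coeff (smult (t1 * qs q n) (Pp q s1 t0 t1 n)) k"
  proof (cases "k < n")
    case True
    define X where "X = (\<Prod>i\<in>{Suc k..<n}. ((s1 * qs (1/q) i + t0) * qs q (Suc i)) / (t1 * qs q n - t1 * qs q i))"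
    have ne: "t1 * qs q n - t1 * qs q k \<noteq> 0" using qs_mono[OF q True] t1 by simp
    have c1: "cf q s1 t0 t1 n (Suc k) = X" using True by (simp add: cf_def X_def)
    have c0: "cf q s1 t0 t1 n k = ((s1 * qs (1/q) k + t0) * qs q (Suc k)) / (t1 * qs q n - t1 * qs q k) * X"
      using True by (simp add: cf_def X_def prod.atLeast_Suc_lessThan)
    show ?thesis using ne unfolding coeff_Lop coeff_smult coeff_Pp c1 c0
      by (simp add: field_simps)
  next
    case False
    then show ?thesis unfolding coeff_Lop coeff_smult coeff_Pp
      by (cases "k = n") (auto simp: cf_def)
  qed
qed




definition Ew :: "real \<Rightarrow> int \<Rightarrow> real" where
  "Ew q j = exp ((real_of_int j - 1) * (real_of_int j * ln q) / 2)"

lemma powi_exp: "0 < q \<Longrightarrow> exp (real_of_int j * ln q) = q powi j"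
  by (metis exp_ln_iff exp_power_int less_le)

lemma Ew_succ: assumes "0 < q" shows "Ew q (j+1) = q powi j * Ew q j"
proof -
  have "(real_of_int (j+1) - 1) * (real_of_int (j+1) * ln q) / 2
      = real_of_int j * ln q + (real_of_int j - 1) * (real_of_int j * ln q) / 2"
    by (simp add: field_simps)
  then have "Ew q (j+1) = exp (real_of_int j * ln q) * Ew q j" unfolding Ew_def by (simp only: exp_add)
  then show ?thesis by (simp add: powi_exp[OF assms])
qed

lemma Ew_pos: "Ew q j > 0" by (simp add: Ew_def)

lemma ratio_summable:
  fixes g :: "nat \<Rightarrow> real"
  assumes q: "0 < q" "q < 1" and rec: "\<And>n. g (Suc n) = r * q^n * g n" and nn: "\<And>n. g n \<ge> 0"
  shows "summable g"
proof -
  have "(\<lambda>n. r * q^n) \<longlonglongrightarrow> r * 0"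
    by (intro tendsto_mult tendsto_const LIMSEQ_power_zero) (use q in simp)
  then have "\<forall>\<^sub>F n in sequentially. r * q^n < 1/2"
    using order_tendstoD(2)[of "\<lambda>n. r * q^n" "r*0" sequentially "1/2"] by simp
  then obtain N where N: "\<And>n. n \<ge> N \<Longrightarrow> r * q^n < 1/2"
    by (auto simp: eventually_sequentially)
  show ?thesis
  proof (rule summable_ratio_test[of "1/2" N])
    fix n assume "n \<ge> N"
    then have "r * q^n * g n \<le> 1/2 * g n" using N[of n] nn[of n]
      by (intro mult_right_mono) auto
    then show "norm (g (Suc n)) \<le> 1/2 * norm (g n)"
      using rec[of n] nn[of n] nn[of "Suc n"] by simp
  qed simp
qed

lemma summable_int_nonneg:
  fixes f :: "int \<Rightarrow> real"
  assumes nn: "\<And>j. f j \<ge> 0"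
    and s1: "summable (\<lambda>n. f (int n))" and s2: "summable (\<lambda>n. f (- int n))"
  shows "f summable_on UNIV"
proof -
  have U: "UNIV = range int \<union> range (\<lambda>n. - int (Suc n))"
  proof -
    have "j \<in> range int \<union> range (\<lambda>n. - int (Suc n))" for j :: int
    proof (cases "j \<ge> 0")
      case True then show ?thesis by (metis UnI1 nonneg_int_cases rangeI)
    next
      case False
      then have "j = - int (Suc (nat (-j - 1)))" by simp
      then show ?thesis by blast
    qed
    then show ?thesis by blast
  qed
  have a: "f summable_on range int"
    by (subst summable_on_reindex) (use s1 nn in \<open>auto simp: o_def summable_on_UNIV_nonneg_real_iff\<close>)
  have s2': "summable (\<lambda>n. f (- int (Suc n)))"
    using s2 summable_Suc_iff[of "\<lambda>n. f (- int n)"] by simp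
  have b: "f summable_on range (\<lambda>n. - int (Suc n))"
    by (subst summable_on_reindex) (use s2' nn in \<open>auto simp: o_def inj_on_def summable_on_UNIV_nonneg_real_iff\<close>)
  have "range int \<inter> range (\<lambda>n. - int (Suc n)) = {}" by auto
  then show ?thesis using summable_on_Un_disjoint[OF a b] U by simp
qed

lemma Ew_summable:
  assumes q: "0 < q" "q < 1" and D: "D > 0"
  shows "(\<lambda>j. D powi j * Ew q j) summable_on UNIV"
proof (rule summable_int_nonneg)
  show "0 \<le> D powi j * Ew q j" for j using D Ew_pos[of q j] by simp
  show "summable (\<lambda>n. D powi int n * Ew q (int n))"
  proof (rule ratio_summable[OF q, of _ D])
    fix n
    have e: "Ew q (int (Suc n)) = q^n * Ew q (int n)"
      using Ew_succ[OF q(1), of "int n"] by (simp add: add.commute)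
    have d: "D powi int (Suc n) = D * D powi int n" by (simp only: power_int_of_nat) simp
    show "D powi int (Suc n) * Ew q (int (Suc n)) = D * q ^ n * (D powi int n * Ew q (int n))"
      by (simp only: d e) (simp add: algebra_simps)
    show "0 \<le> D powi int n * Ew q (int n)" using D Ew_pos[of q "int n"] by simp
  qed
  show "summable (\<lambda>n. D powi (- int n) * Ew q (- int n))"
  proof (rule ratio_summable[OF q, of _ "q/D"])
    fix n
    have e: "Ew q (- int n) = q powi (- int (Suc n)) * Ew q (- int (Suc n))"
      using Ew_succ[OF q(1), of "- int (Suc n)"] by simp
    have "q powi (- int (Suc n)) = 1 / (q * q^n)"
      by (simp only: power_int_minus power_int_of_nat) (simp add: field_simps)
    moreover have "D powi (- int (Suc n)) = D powi (- int n) / D"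
      using D by (simp only: power_int_minus power_int_of_nat) (simp add: field_simps)
    ultimately show "D powi (- int (Suc n)) * Ew q (- int (Suc n)) = q / D * q ^ n * (D powi (- int n) * Ew q (- int n))"
      using e q D by (simp add: field_simps)
    show "0 \<le> D powi (- int n) * Ew q (- int n)" using D Ew_pos[of q "- int n"] by simp
  qed
qed

lemma Ew_poly_summable:
  assumes q: "0 < q" "q < 1"
  shows "\<forall>D>0. (\<lambda>j. D powi j * Ew q j * poly h (q powi j)) summable_on UNIV"
proof (induction h)
  case 0 then show ?case by simp
next
  case (pCons a h)
  show ?case
  proof (intro allI impI)
    fix D :: real assume D: "D > 0"
    have 1: "(\<lambda>j. a * (D powi j * Ew q j)) summable_on UNIV"
      by (rule summable_on_cmult_right[OF Ew_summable[OF q D]])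
    have 2: "(\<lambda>j. (D*q) powi j * Ew q j * poly h (q powi j)) summable_on UNIV"
      using pCons.IH D q by simp
    have "(\<lambda>j. a * (D powi j * Ew q j) + (D*q) powi j * Ew q j * poly h (q powi j)) summable_on UNIV"
      by (rule summable_on_add[OF 1 2])
    moreover have "a * (D powi j * Ew q j) + (D*q) powi j * Ew q j * poly h (q powi j)
       = D powi j * Ew q j * poly (pCons a h) (q powi j)" for j
      by (simp add: power_int_mult_distrib algebra_simps)
    ultimately show "(\<lambda>j. D powi j * Ew q j * poly (pCons a h) (q powi j)) summable_on UNIV"
      by simp
  qed
qed




lemma L_disc:
  assumes q: "0 < q" "q \<noteq> 1" and c: "(1 - 1/q) * t0 = - s1" and x: "x \<noteq> 0"
  shows "(1-q) * poly (Lop q [:0,s1:] [:t0,t1:] f) x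
       = t0*q/x*(poly f (x/q) - poly f x) + t1*(poly f x - poly f (q*x))"
proof -
  have q1: "1/q \<noteq> 1" using q by (simp add: field_simps)
  have xq: "1/q*x \<noteq> 0" using q x by simp
  have s: "s1 = -(1 - 1/q) * t0" using c by (simp add: algebra_simps)
  have A: "poly (qdp (1/q) (qdp q f)) x
      = (poly (qdp q f) x - poly (qdp q f) (1/q*x)) / ((1 - 1/q)*x)"
    by (rule poly_qdp[OF x q1])
  have B: "poly (qdp q f) x = (poly f x - poly f (q*x)) / ((1-q)*x)"
    by (rule poly_qdp[OF x q(2)])
  have C: "poly (qdp q f) (1/q*x) = (poly f (1/q*x) - poly f (q*(1/q*x))) / ((1-q)*(1/q*x))"
    by (rule poly_qdp[OF xq q(2)])
  have qq: "q*(1/q*x) = x" "1/q*x = x/q" using q by auto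
  have C': "poly (qdp q f) (x/q) = (poly f (x/q) - poly f x) / ((1-q)*(x/q))"
    using C qq by simp
  have A': "poly (qdp (1/q) (qdp q f)) x = (poly (qdp q f) x - poly (qdp q f) (x/q)) / ((1 - 1/q)*x)"
    using A qq by simp
  have L: "poly (Lop q [:0,s1:] [:t0,t1:] f) x
      = s1 * x * poly (qdp (1/q) (qdp q f)) x + (t0 + t1*x) * poly (qdp q f) x"
    by (simp add: Lop_def algebra_simps)
  define a b cc where "a = poly f (x/q)" "b = poly f x" "cc = poly f (q*x)"
  define Y where "Y = (b - cc) / ((1-q)*x) - (a - b) / ((1-q)*(x/q))"
  have nz: "1 - 1/q \<noteq> 0" using q by (simp add: field_simps)
  have k: "(1 - 1/q)*x \<noteq> 0" using nz x by simp
  have aux: "\<And>c::real. c * x \<noteq> 0 \<Longrightarrow> - c * t0 * x * (Y / (c*x)) = - t0 * Y"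
    by (simp add: field_simps)
  have 1: "s1 * x * (Y / ((1 - 1/q)*x)) = - t0 * Y"
    unfolding s using aux[OF k] by simp
  have r: "1 - q \<noteq> 0" using q by simp
  have aux2: "\<And>rr uu vv. rr \<noteq> 0 \<Longrightarrow> rr * (uu / (rr*x) - vv / (rr*(x/q))) = uu/x - q * vv/x"
    using q x by (simp add: field_simps)
  have aux3: "\<And>rr uu. rr \<noteq> 0 \<Longrightarrow> rr * (t0 + t1*x) * (uu / (rr*x)) = t0*uu/x + t1*uu"
    using q x by (simp add: field_simps)
  have Y': "(1-q) * Y = (b - cc)/x - q*(a-b)/x" unfolding Y_def by (rule aux2[OF r])
  have 2: "(1-q) * (t0 + t1*x) * ((b - cc) / ((1-q)*x)) = t0*(b-cc)/x + t1*(b-cc)"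
    by (rule aux3[OF r])
  define B where "B = (b - cc) / ((1-q)*x)"
  have "(1-q) * (- t0 * Y + (t0 + t1*x) * B) = - t0 * ((1-q) * Y) + (1-q) * (t0 + t1*x) * B"
    by (simp add: algebra_simps)
  also have "\<dots> = - t0 * ((b - cc)/x - q*(a-b)/x) + (t0*(b-cc)/x + t1*(b-cc))"
    unfolding Y' B_def 2 ..
  also have "\<dots> = t0*q/x*(a - b) + t1*(b - cc)"
    using x by (simp add: field_simps)
  finally have "(1-q) * (s1 * x * (Y / ((1 - 1/q)*x)) + (t0 + t1*x) * ((b - cc) / ((1-q)*x)))
       = t0*q/x*(a - b) + t1*(b - cc)"
    unfolding 1 B_def .
  then have "(1-q) * (s1 * x * (((b - cc) / ((1-q)*x) - (a - b) / ((1-q)*(x/q))) / ((1 - 1/q)*x))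
        + (t0 + t1*x) * ((b - cc) / ((1-q)*x)))
       = t0*q/x*(a - b) + t1*(b - cc)" unfolding Y_def .
  then show ?thesis unfolding L A' C' B a_b_cc_def[symmetric] .
qed




lemma tsum_summable:
  assumes q: "0 < q" "q < 1" and C: "C > 0"
  shows "(\<lambda>j. (1-q) * q powi j * (poly f (q powi j) * poly g (q powi j)) * (C powi j * Ew q j)) summable_on UNIV"
proof -
  have s: "(\<lambda>j. C powi j * Ew q j * poly (smult (1-q) ([:0,1:] * f * g)) (q powi j)) summable_on UNIV"
    using Ew_poly_summable[OF q] C by blast
  have eq: "(\<lambda>j. C powi j * Ew q j * poly (smult (1-q) ([:0,1:] * f * g)) (q powi j))
      = (\<lambda>j. (1-q) * q powi j * (poly f (q powi j) * poly g (q powi j)) * (C powi j * Ew q j))"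
    by (rule ext) (simp add: algebra_simps)
  show ?thesis using s unfolding eq .
qed

lemma alg_key:
  fixes x q C t0 t1 w' fa fb fc ga gb gc Fb Gb :: real
  assumes x: "x \<noteq> 0" and q: "q \<noteq> 0" and Ct: "C*t0*q = -t1"
    and F: "Fb = t0*q/x*(fa-fb) + t1*(fb-fc)" and G: "Gb = t0*q/x*(ga-gb) + t1*(gb-gc)"
  shows "x*(C*(x/q)*w')*(Fb*gb - fb*Gb)
       = t1*x*(C*(x/q)*w')*(fb*gc - gb*fc) - t1*(x/q)*w'*(fa*gb - ga*fb)"
proof -
  have t1: "t1 = - (C*t0*q)" using Ct by simp
  show ?thesis unfolding F G t1 using x q by (simp add: field_simps) (simp add: algebra_simps)?
qed

lemma orth:
  assumes q: "0 < q" "q < 1" and c: "(1 - 1/q) * t0 = - s1" and C: "C > 0" and Ct: "C*t0*q = -t1"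
    and ef: "Lop q [:0,s1:] [:t0,t1:] f = smult mf f"
    and eg: "Lop q [:0,s1:] [:t0,t1:] g = smult mg g"
    and hs: "((\<lambda>j. (1-q) * q powi j * (poly f (q powi j) * poly g (q powi j)) * (C powi j * Ew q j)) has_sum I) UNIV"
  shows "(mf - mg) * I = 0"
proof -
  define w where "w j = C powi j * Ew q j" for j
  define W where "W j = t1 * q powi j * w j * (poly f (q powi j) * poly g (q * q powi j)
                   - poly g (q powi j) * poly f (q * q powi j))" for j
  have "(\<lambda>j. C powi j * Ew q j * poly (smult t1 ([:0,1:] * (f * (g \<circ>\<^sub>p [:0,q:]) - g * (f \<circ>\<^sub>p [:0,q:])))) (q powi j)) summable_on UNIV"
    using Ew_poly_summable[OF q] C by blast
  moreover have "C powi j * Ew q j * poly (smult t1 ([:0,1:] * (f * (g \<circ>\<^sub>p [:0,q:]) - g * (f \<circ>\<^sub>p [:0,q:])))) (q powi j) = W j" for j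
    by (simp add: W_def w_def poly_pcompose algebra_simps)
  ultimately have "W summable_on UNIV" by simp
  then obtain V where hV: "(W has_sum V) UNIV" by (auto simp: summable_on_def)
  have "((\<lambda>j. W (j-1)) has_sum V) UNIV = (W has_sum V) UNIV"
    by (rule has_sum_reindex_bij_witness[where i="\<lambda>b. b+1" and j="\<lambda>a. a-1"]) auto
  with hV have hV1: "((\<lambda>j. W (j-1)) has_sum V) UNIV" by simp
  have key: "(mf - mg) * ((1-q) * q powi j * (poly f (q powi j) * poly g (q powi j)) * (C powi j * Ew q j))
       = W j - W (j-1)" for j
  proof -
    define x where "x = q powi j"
    have x0: "x \<noteq> 0" using q by (simp add: x_def)
    have q0: "q \<noteq> 0" using q by simp
    have xq: "q powi (j-1) = x/q" using q0 by (simp add: x_def power_int_diff)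
    have qxq: "q * (x/q) = x" using q0 by simp
    have Cj: "C powi j = C * C powi (j-1)"
      using power_int_add_1'[of C "j-1"] C by simp
    have Ej: "Ew q j = (x/q) * Ew q (j-1)"
      using Ew_succ[OF q(1), of "j-1"] xq by simp
    have wj: "w j = C*(x/q)*w (j-1)" unfolding w_def Cj Ej by (simp add: algebra_simps)
    have F: "(1-q)*mf*poly f x = t0*q/x*(poly f (x/q) - poly f x) + t1*(poly f x - poly f (q*x))"
      using L_disc[OF q(1) _ c x0, of t1 f] q ef by (simp add: algebra_simps)
    have G: "(1-q)*mg*poly g x = t0*q/x*(poly g (x/q) - poly g x) + t1*(poly g x - poly g (q*x))"
      using L_disc[OF q(1) _ c x0, of t1 g] q eg by (simp add: algebra_simps)
    have Wj: "W j = t1*x*(C*(x/q)*w (j-1))*(poly f x * poly g (q*x) - poly g x * poly f (q*x))"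
      unfolding W_def wj x_def by (simp add: algebra_simps)
    have Wj1: "W (j-1) = t1*(x/q)*w (j-1)*(poly f (x/q) * poly g x - poly g (x/q) * poly f x)"
      unfolding W_def xq qxq by (simp add: algebra_simps)
    have "(mf - mg) * ((1-q) * x * (poly f x * poly g x) * w j)
        = x*(C*(x/q)*w (j-1))*(((1-q)*mf*poly f x)*poly g x - poly f x*((1-q)*mg*poly g x))"
      unfolding wj using q0 by (simp add: divide_simps) (simp add: algebra_simps)?
    also have "\<dots> = W j - W (j-1)"
      unfolding Wj Wj1 by (rule alg_key[OF x0 q0 Ct F G])
    finally show ?thesis by (simp add: x_def w_def)
  qed
  have h1: "((\<lambda>j. (mf - mg) * ((1-q) * q powi j * (poly f (q powi j) * poly g (q powi j)) * (C powi j * Ew q j))) has_sum ((mf - mg) * I)) UNIV"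
    by (rule has_sum_cmult_right[OF hs])
  have h2: "((\<lambda>j. W j + - W (j-1)) has_sum (V + - V)) UNIV"
  proof -
    have hm: "((\<lambda>j. - W (j-1)) has_sum (- V)) UNIV" using hV1 by (simp add: has_sum_uminus)
    show ?thesis by (rule has_sum_add[OF hV hm])
  qed
  have h2': "((\<lambda>j. (mf - mg) * ((1-q) * q powi j * (poly f (q powi j) * poly g (q powi j)) * (C powi j * Ew q j))) has_sum 0) UNIV"
    using h2 key by simp
  show ?thesis using has_sum_unique[OF h1 h2'] .
qed




lemma qnum_qs: "q \<noteq> 1 \<Longrightarrow> qnum q (int n) = qs q n"
  by (simp add: qnum_def qs_def sum_gp_strict)

lemma nonroot:
  fixes p :: "real poly"
  assumes p: "p \<noteq> 0" and q: "0 < q" "q < 1"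
  shows "\<exists>k::nat. poly p (q^k) \<noteq> 0"
proof (rule ccontr)
  assume "\<not> ?thesis"
  then have "range (\<lambda>k::nat. q^k) \<subseteq> {x. poly p x = 0}" by auto
  then have fin: "finite (range (\<lambda>k::nat. q^k))"
    using poly_roots_finite[OF p] finite_subset by blast
  have "inj (\<lambda>k::nat. q^k)"
  proof (rule injI)
    fix a b :: nat assume "q^a = q^b"
    then show "a = b" using q
      by (metis linorder_neqE_nat less_irrefl power_strict_decreasing)
  qed
  then show False using fin finite_imageD by blast
qed

lemma rho_val:
  fixes q C :: real and \<alpha> :: complex and \<rho> :: "real \<Rightarrow> complex"
  assumes q: "0 < q" "q < 1"
    and \<alpha>: "exp (\<alpha> * complex_of_real (ln q)) = complex_of_real C"
    and \<rho>: "\<And>x. \<rho> x = exp (\<alpha> * complex_of_real (ln \<bar>x\<bar>))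
                  * complex_of_real (exp ((log q x - 1) * ln x / 2))"
  shows "\<rho> (q powi j) = complex_of_real (C powi j * Ew q j)"
proof -
  have x: "q powi j = q powr real_of_int j" using q by (simp add: powr_real_of_int')
  have lnx: "ln (q powi j) = real_of_int j * ln q" unfolding x by simp
  have absx: "\<bar>q powi j\<bar> = q powi j" using q by simp
  have logx: "log q (q powi j) = real_of_int j" unfolding x using q by simp
  have "exp (\<alpha> * complex_of_real (ln \<bar>q powi j\<bar>)) = exp (of_int j * (\<alpha> * complex_of_real (ln q)))"
    unfolding absx lnx by (simp add: algebra_simps)
  also have "\<dots> = complex_of_real (C powi j)"
    unfolding exp_power_int[symmetric] \<alpha> by simp
  finally have 1: "exp (\<alpha> * complex_of_real (ln \<bar>q powi j\<bar>)) = complex_of_real (C powi j)" .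
  have 2: "exp ((log q (q powi j) - 1) * ln (q powi j) / 2) = Ew q j"
    unfolding logx lnx Ew_def ..
  show ?thesis unfolding \<rho> 1 2 by simp
qed

theorem theorem5p17:
  fixes q s1 \<tau>0 \<tau>1 :: real and \<sigma>1 \<tau> :: "real poly" and \<alpha> :: complex
    and \<rho> :: "real \<Rightarrow> complex"
  assumes q: "0 < q" "q < 1"
    and \<sigma>1: "\<sigma>1 = [:0, s1:]" "s1 \<noteq> 0"
    and \<tau>: "\<tau> = [:\<tau>0, \<tau>1:]" "\<tau>1 \<noteq> 0"
    and cond: "(1 - 1/q) * \<tau>0 = - s1"
    and Lam: "\<tau>1 / s1 < 0"
    and \<alpha>: "exp (\<alpha> * complex_of_real (ln q))
              = complex_of_real (q powi (-2) * coeff (sigma2 q \<sigma>1 \<tau>) 2 / s1)"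
    and \<rho>: "\<And>x. \<rho> x = exp (\<alpha> * complex_of_real (ln \<bar>x\<bar>))
                  * complex_of_real (exp ((log q x - 1) * ln x / 2))"
  shows "\<exists>P :: nat \<Rightarrow> real poly. \<exists>d :: nat \<Rightarrow> complex.
           (\<forall>n. degree (P n) = n \<and> qEHT_solution q \<sigma>1 \<tau> (qlambda q \<sigma>1 \<tau> n) (poly (P n))
                \<and> d n \<noteq> 0) \<and>
           (\<forall>m n. jackson_has_integral q
                     (\<lambda>x. complex_of_real (poly (P n) x * poly (P m) x) * \<rho> x)
                     (if m = n then d n else 0))"
proof -
  define C where "C = q powi (-2) * coeff (sigma2 q \<sigma>1 \<tau>) 2 / s1"
  have q0: "q \<noteq> 0" "q \<noteq> 1" using q by auto
  have cf2: "coeff (sigma2 q \<sigma>1 \<tau>) 2 = (q - 1) * \<tau>1"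
    unfolding sigma2_def \<sigma>1 \<tau> using q0 by (simp add: numeral_2_eq_2 field_simps)
  have qm2: "q powi (-2) = 1 / q^2" by (simp add: power_int_minus field_simps)
  have C': "C = q powi (-2) * (q - 1) * (\<tau>1 / s1)" unfolding C_def cf2 by simp
  have Cpos: "C > 0"
  proof -
    have "q powi (-2) * (q - 1) < 0" using q by (intro mult_pos_neg) auto
    then show ?thesis unfolding C' using Lam by (rule mult_neg_neg)
  qed
  have c2: "\<tau>0 * (q - 1) = - s1 * q" using cond q0 by (simp add: field_simps)
  have Ct: "C * \<tau>0 * q = - \<tau>1"
  proof -
    have "C * \<tau>0 * q = \<tau>1 * (\<tau>0 * (q - 1)) / (q * s1)"
      unfolding C' qm2 using q0 \<sigma>1(2) by (simp add: field_simps power2_eq_square)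
    also have "\<dots> = - \<tau>1" unfolding c2 using q0 \<sigma>1(2) by (simp add: field_simps)
    finally show ?thesis .
  qed
  define P where "P n = Pp q s1 \<tau>0 \<tau>1 n" for n
  have eig: "Lop q [:0,s1:] [:\<tau>0,\<tau>1:] (P n) = smult (\<tau>1 * qs q n) (P n)" for n
    unfolding P_def by (rule Pp_eigen[OF q(1) \<tau>(2)])
  define T where "T n m j = (1-q) * q powi j * (poly (P n) (q powi j) * poly (P m) (q powi j)) * (C powi j * Ew q j)" for n m j
  have Teq: "T n m = (\<lambda>j. (1-q) * q powi j * (poly (P n) (q powi j) * poly (P m) (q powi j)) * (C powi j * Ew q j))" for n m
      by (rule ext) (simp add: T_def)
  have Tsum: "(T n m has_sum infsum (T n m) UNIV) UNIV" for n m
  proof -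
    note Teq[of n m]
    then have "T n m summable_on UNIV" using tsum_summable[OF q Cpos, of "P n" "P m"] by simp
    then show ?thesis by (rule has_sum_infsum)
  qed
  have rv: "\<rho> (q powi j) = complex_of_real (C powi j * Ew q j)" for j
    by (rule rho_val[OF q _ \<rho>]) (use \<alpha> in \<open>simp add: C_def\<close>)
  have mudiff: "\<tau>1 * qs q n \<noteq> \<tau>1 * qs q m" if "m \<noteq> n" for m n
  proof -
    have "qs q n \<noteq> qs q m" using that qs_mono[OF q(1)] by (metis less_irrefl linorder_neqE_nat)
    then show ?thesis using \<tau>(2) by simp
  qed
  have orth0: "infsum (T n m) UNIV = 0" if "m \<noteq> n" for m n
  proof -
    have "(\<tau>1 * qs q n - \<tau>1 * qs q m) * infsum (T n m) UNIV = 0"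
      by (rule orth[OF q cond Cpos Ct eig eig]) (use Tsum[of n m] in \<open>simp only: Teq\<close>)
    then show ?thesis using mudiff[OF that] by simp
  qed
  have pos: "infsum (T n n) UNIV > 0" for n
  proof -
    have "coeff (P n) n = 1" by (simp add: P_def coeff_Pp cf_def)
    then have "P n \<noteq> 0" by auto
    then obtain k :: nat where k: "poly (P n) (q^k) \<noteq> 0" using nonroot[OF _ q] by blast
    have nn: "T n n j \<ge> 0" for j
    proof -
      have a: "0 \<le> (1-q) * q powi j" using q by simp
      have b: "0 \<le> poly (P n) (q powi j) * poly (P n) (q powi j)" by simp
      have c: "0 \<le> C powi j * Ew q j" using Cpos Ew_pos[of q j] by simp
      show ?thesis using mult_nonneg_nonneg[OF mult_nonneg_nonneg[OF a b] c] by (simp add: T_def)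
    qed
    have "T n n (int k) > 0"
    proof -
      have a: "0 < (1-q) * q powi (int k)" using q by simp
      have b: "0 < poly (P n) (q powi (int k)) * poly (P n) (q powi (int k))" using k by (auto simp: zero_less_mult_iff linorder_neq_iff)
      have c: "0 < C powi (int k) * Ew q (int k)" using Cpos Ew_pos[of q "int k"] by simp
      show ?thesis using mult_pos_pos[OF mult_pos_pos[OF a b] c] by (simp add: T_def)
    qed
    moreover have "T n n (int k) \<le> infsum (T n n) UNIV"
    proof (rule has_sum_mono_neutral[OF _ Tsum[of n n]])
      show "((\<lambda>_. T n n (int k)) has_sum T n n (int k)) {int k}"
        using has_sum_finite[of "{int k}" "\<lambda>_. T n n (int k)"] by simp
    qed (use nn in auto)
    ultimately show ?thesis by linarith
  qed
  define d where "d n = complex_of_real (infsum (T n n) UNIV)" for n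
  show ?thesis
  proof (intro exI conjI allI)
    fix n
    show "degree (P n) = n" unfolding P_def by (rule degree_Pp)
    show "d n \<noteq> 0" unfolding d_def using pos[of n] by simp
    have lam: "qlambda q \<sigma>1 \<tau> n = - (\<tau>1 * qs q n)"
      unfolding qlambda_def \<sigma>1 \<tau> using qnum_qs[OF q0(2)] by (simp add: numeral_2_eq_2)
    show "qEHT_solution q \<sigma>1 \<tau> (qlambda q \<sigma>1 \<tau> n) (poly (P n))"
      using lam eig[of n] by (simp add: qEHT_iff[OF q(1) q0(2)] \<sigma>1(1) \<tau>(1))
  next
    fix m n
    have fam: "complex_of_real ((1 - q) * q powi j) *
           (complex_of_real (poly (P n) (q powi j) * poly (P m) (q powi j)) * \<rho> (q powi j))
         = complex_of_real (T n m j)" for j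
      unfolding rv T_def by simp
    have val: "(if m = n then d n else 0) = complex_of_real (infsum (T n m) UNIV)"
      using orth0[of m n] by (simp add: d_def)
    show "jackson_has_integral q (\<lambda>x. complex_of_real (poly (P n) x * poly (P m) x) * \<rho> x)
            (if m = n then d n else 0)"
      unfolding jackson_has_integral_def fam val
      by (rule has_sum_of_real[OF Tsum])
  qed
qed


end
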